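(* Let $L\ge1$ and put $u_\ell=e^{-2\mathcal{C}(\ell-1)/L}$ and $\pi_{(\ell)}=u_\ell/\sum_{\ell'=1}^L u_{\ell'}$ for $\ell=1,\dots,L$. Define, for $x\in[0,1]$, $$g_L(x)=\sum_{\ell=1}^L \pi_{(\ell)}\,\Phi\big(\mu(x,u_\ell\,\mathcal{C}'/R)\big),\qquad g(x)=\frac{2\mathcal{C}}{\nu}\int_0^1 e^{-2\mathcal{C}t}\,\Phi\big(\mu(x,e^{-2\mathcal{C}t}\mathcal{C}'/R)\big)\,dt .$$ Then $g_L(x)\ge g(x)$ for all $x\in[0,1]$, and moreover $g(x)=\frac1\nu\int_{1-\nu}^1\Phi\big(\mu(x,u\,\mathcal{C}'/R)\big)\,du$.
   Context: Fix an integer $M\ge2$, $snr=P/\sigma^2>0$, $\nu=snr/(1+snr)$, $\mathcal{C}=\tfrac12\ln(1+snr)$ (natural logarithm, so $e^{-2\mathcal{C}}=1-\nu$), constants $a\ge 0$, $\mathcal{C}'>0$, $R>0$. $\Phi,\phi$ denote the standard normal distribution function and density. For $x\in[0,1]$ and $u>0$, $$\mu(x,u)=\Big(\sqrt{u/(1-x\nu)}-1\Big)\sqrt{2\log M}-a.$$ *)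

theory Defs
  imports "HOL-Probability.Probability"
begin

definition Phi :: "real \<Rightarrow> real" where
  "Phi x = (LBINT t:{..x}. std_normal_density t)"

definition nu_of :: "real \<Rightarrow> real" where
  "nu_of snr = snr / (1 + snr)"

definition cap_C :: "real \<Rightarrow> real" where
  "cap_C snr = ln (1 + snr) / 2"

definition mu :: "nat \<Rightarrow> real \<Rightarrow> real \<Rightarrow> real \<Rightarrow> real \<Rightarrow> real" where
  "mu M snr a x u = (sqrt (u / (1 - x * nu_of snr)) - 1) * sqrt (2 * ln (real M)) - a"

definition u_l :: "real \<Rightarrow> nat \<Rightarrow> nat \<Rightarrow> real" where
  "u_l snr L l = exp (- 2 * cap_C snr * (real l - 1) / real L)"

definition pi_l :: "real \<Rightarrow> nat \<Rightarrow> nat \<Rightarrow> real" where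
  "pi_l snr L l = u_l snr L l / (\<Sum>l'=1..L. u_l snr L l')"

definition g_L :: "nat \<Rightarrow> real \<Rightarrow> real \<Rightarrow> real \<Rightarrow> real \<Rightarrow> nat \<Rightarrow> real \<Rightarrow> real" where
  "g_L M snr a C' R L x =
     (\<Sum>l=1..L. pi_l snr L l * Phi (mu M snr a x (u_l snr L l * C' / R)))"

definition g :: "nat \<Rightarrow> real \<Rightarrow> real \<Rightarrow> real \<Rightarrow> real \<Rightarrow> real \<Rightarrow> real" where
  "g M snr a C' R x =
     (2 * cap_C snr / nu_of snr) *
       (LBINT t=0..1. exp (- 2 * cap_C snr * t) *
          Phi (mu M snr a x (exp (- 2 * cap_C snr * t) * C' / R)))"

end

theory Submission imports Defs begin
lemma Phi_cdf: "Phi x = cdf (density lborel std_normal_density) x"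
proof -
  let ?N = "density lborel (\<lambda>t. ennreal (std_normal_density t))"
  have "cdf ?N x = measure ?N {..x}" by (simp add: cdf_def)
  also have "\<dots> = integral\<^sup>L ?N (indicator {..x})"
    by simp
  also have "\<dots> = (LINT t|lborel. std_normal_density t *\<^sub>R indicator {..x} t)"
    by (rule integral_density) auto
  also have "\<dots> = Phi x"
    unfolding Phi_def set_lebesgue_integral_def by (simp add: mult.commute)
  finally show ?thesis by simp
qed

lemma real_distr_N: "real_distribution (density lborel std_normal_density)"
  unfolding real_distribution_def real_distribution_axioms_def
  using prob_space_normal_density by auto

lemma Phi_mono: "x \<le> y \<Longrightarrow> Phi x \<le> Phi y"
  unfolding Phi_cdf using finite_borel_measure.cdf_nondecreasing[OF real_distribution.finite_borel_measure_M[OF real_distr_N]] by blast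

lemma Phi_cont: "isCont Phi x"
proof -
  have "emeasure (density lborel std_normal_density) {x} = 0"
    by (subst emeasure_density) (auto intro!: nn_integral_null_set)
  hence "measure (density lborel std_normal_density) {x} = 0"
    by (simp add: measure_def)
  thus ?thesis unfolding Phi_cdf[abs_def]
    using finite_borel_measure.isCont_cdf[OF real_distribution.finite_borel_measure_M[OF real_distr_N]]
    by simp
qed
lemma riemann_upper:
  fixes U :: "nat \<Rightarrow> real" and F :: "real \<Rightarrow> real"
  assumes dec: "\<And>l. U (Suc l) \<le> U l"
    and mono: "\<And>x y. x \<le> y \<Longrightarrow> F x \<le> F y"
    and cont: "\<And>x. isCont F x"
  shows "integral {U (Suc k)..U 1} F \<le> (\<Sum>l=1..k. (U l - U (Suc l)) * F (U l))"
proof (induction k)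
  case 0
  then show ?case by simp
next
  case (Suc k)
  have co: "continuous_on S F" for S using cont by (simp add: continuous_at_imp_continuous_on)
  have decs: "U m \<le> U n" if "n \<le> m" for m n
    using that by (induction rule: dec_induct) (auto intro: order_trans dec)
  have d1: "U (Suc k) \<le> U 1" by (rule decs) simp
  have "integral {U (Suc (Suc k))..U 1} F = integral {U (Suc (Suc k))..U (Suc k)} F + integral {U (Suc k)..U 1} F"
    using Henstock_Kurzweil_Integration.integral_combine[where a="U (Suc (Suc k))" and c="U (Suc k)" and b="U 1" and f=F] dec[of "Suc k"] d1
      integrable_continuous_interval[OF co] by simp
  also have "integral {U (Suc (Suc k))..U (Suc k)} F \<le> integral {U (Suc (Suc k))..U (Suc k)} (\<lambda>_. F (U (Suc k)))"
    by (rule integral_le) (auto intro: integrable_continuous_interval co mono)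
  also have "\<dots> = (U (Suc k) - U (Suc (Suc k))) * F (U (Suc k))"
    using dec[of "Suc k"] by simp
  finally show ?case using Suc.IH by simp
qed

theorem mainTheorem3:
  fixes M L :: nat and snr a C' R :: real
  assumes "M \<ge> 2" and "snr > 0" and "a \<ge> 0" and "C' > 0" and "R > 0" and "L \<ge> 1"
  shows "\<forall>x\<in>{0..1::real}.
           g_L M snr a C' R L x \<ge> g M snr a C' R x \<and>
           g M snr a C' R x =
             (1 / nu_of snr) * (LBINT u=(1 - nu_of snr)..1. Phi (mu M snr a x (u * C' / R)))"
proof
  fix x :: real assume x: "x \<in> {0..1}"
  define nu where "nu = nu_of snr"
  define c where "c = cap_C snr"
  have nu_pos: "0 < nu" and nu_lt: "nu < 1" using assms(2) by (auto simp: nu_def nu_of_def)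
  have c_pos: "0 < c" using assms(2) by (simp add: c_def cap_C_def)
  have expc: "exp (- 2 * c) = 1 - nu"
  proof -
    have "exp (- 2 * c) = inverse (exp (ln (1 + snr)))"
      by (simp add: c_def cap_C_def exp_minus)
    also have "\<dots> = 1 / (1 + snr)" using assms(2) by (simp add: divide_inverse)
    also have "\<dots> = 1 - nu" using assms(2) by (simp add: nu_def nu_of_def field_simps)
    finally show ?thesis .
  qed
  have D: "0 < 1 - x * nu"
  proof -
    have "x * nu \<le> 1 * nu" using x nu_pos by (intro mult_right_mono) auto
    thus ?thesis using nu_lt by simp
  qed
  define F where "F u = Phi (mu M snr a x (u * C' / R))" for u
  have Fcont: "isCont F u" for u
  proof -
    have "isCont (\<lambda>u. mu M snr a x (u * C' / R)) u"
      unfolding mu_def using D assms(5) by (intro continuous_intros) (auto simp: nu_def)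
    thus ?thesis unfolding F_def by (rule isCont_o2) (rule Phi_cont)
  qed
  have Fco: "continuous_on S F" for S using Fcont by (simp add: continuous_at_imp_continuous_on)
  have Fmono: "F u \<le> F v" if "u \<le> v" for u v
  proof -
    have "u * C' / R / (1 - x * nu) \<le> v * C' / R / (1 - x * nu)"
      using that D assms(4,5) by (intro divide_right_mono mult_right_mono) auto
    hence "sqrt (u * C' / R / (1 - x * nu)) \<le> sqrt (v * C' / R / (1 - x * nu))"
      by simp
    hence "mu M snr a x (u * C' / R) \<le> mu M snr a x (v * C' / R)"
      unfolding mu_def nu_def[symmetric] using assms(1) by (intro diff_right_mono mult_right_mono) auto
    thus ?thesis unfolding F_def by (rule Phi_mono)
  qed
  define J where "J = (LBINT u=(1 - nu)..1. F u)"
  have J_eq: "J = integral {1 - nu..1} F"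
    unfolding J_def using nu_pos interval_integral_eq_integral[of "1-nu" 1 F]
      borel_integrable_atLeastAtMost'[OF Fco, of "1-nu" 1] by (simp add: one_ereal_def)
  have g_eq: "g M snr a C' R x = (1 / nu) * J"
  proof -
    define I where "I = (LBINT t=0..1. exp (- 2 * cap_C snr * t) *
          Phi (mu M snr a x (exp (- 2 * cap_C snr * t) * C' / R)))"
    have sub0: "(LBINT t=ereal 0..ereal 1. (- 2 * cap_C snr * exp (- 2 * cap_C snr * t)) *\<^sub>R F (exp (- 2 * cap_C snr * t)))
        = (LBINT y=ereal (exp (- 2 * cap_C snr * 0))..ereal (exp (- 2 * cap_C snr * 1)). F y)"
      by (rule interval_integral_substitution_finite)
        (auto intro!: derivative_eq_intros Fco continuous_intros)
    have sub: "(LBINT t=0..1. (- 2 * cap_C snr * exp (- 2 * cap_C snr * t)) *\<^sub>R F (exp (- 2 * cap_C snr * t)))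
        = - J"
      using sub0 expc unfolding J_def
      by (simp add: c_def zero_ereal_def one_ereal_def interval_integral_endpoints_reverse[of _ "ereal 1"])
    have "(LBINT t=0..1. (- 2 * cap_C snr * exp (- 2 * cap_C snr * t)) *\<^sub>R F (exp (- 2 * cap_C snr * t)))
        = (- 2 * cap_C snr) * I"
      unfolding I_def F_def
      using interval_lebesgue_integral_mult_right[of lborel 0 1 "- 2 * cap_C snr"
        "\<lambda>t. exp (- 2 * cap_C snr * t) * Phi (mu M snr a x (exp (- 2 * cap_C snr * t) * C' / R))"]
      by (simp only: real_scaleR_def mult.assoc)
    hence "2 * c * I = J" using sub by (simp add: c_def)
    moreover have "g M snr a C' R x = (2 * c / nu) * I"
      unfolding g_def I_def c_def nu_def by (rule refl)
    ultimately show ?thesis using nu_pos by (simp add: field_simps)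
  qed
  show "g_L M snr a C' R L x \<ge> g M snr a C' R x \<and>
           g M snr a C' R x =
             (1 / nu_of snr) * (LBINT u=(1 - nu_of snr)..1. Phi (mu M snr a x (u * C' / R)))"
  proof
    show "g M snr a C' R x = (1 / nu_of snr) * (LBINT u=(1 - nu_of snr)..1. Phi (mu M snr a x (u * C' / R)))"
      using g_eq unfolding J_def F_def nu_def .
  next
    define U where "U = u_l snr L"
    define r where "r = exp (- 2 * c / real L)"
    have Lpos: "real L > 0" using assms(6) by simp
    have U1: "U 1 = 1" by (simp add: U_def u_l_def)
    have UL: "U (Suc L) = 1 - nu" using Lpos expc by (simp add: U_def u_l_def c_def)
    have Usuc: "U (Suc l) = r * U l" for l
    proof -
      have "- 2 * c * real l / real L = - 2 * c / real L + - 2 * c * (real l - 1) / real L"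
        using Lpos by (simp add: field_simps)
      thus ?thesis by (simp add: U_def u_l_def r_def c_def exp_add[symmetric])
    qed
    have Upos: "U l > 0" for l by (simp add: U_def u_l_def)
    have r_pos: "0 < r" and r_lt: "r < 1" using c_pos Lpos by (auto simp: r_def)
    have dec: "U (Suc l) \<le> U l" for l using Usuc Upos[of l] r_lt r_pos
      by (simp add: mult_le_cancel_right1)
    have main: "integral {U (Suc L)..U 1} F \<le> (\<Sum>l=1..L. (U l - U (Suc l)) * F (U l))"
      by (rule riemann_upper[where U=U and F=F, OF dec Fmono Fcont])
    define S where "S = (\<Sum>l=1..L. U l)"
    have tele: "(\<Sum>l=1..L. (U l - U (Suc l))) = U 1 - U (Suc L)"
      using sum_Suc_diff[of 1 L "\<lambda>l. - U l"] assms(6) by (simp add: sum_negf)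
    have "(\<Sum>l=1..L. (U l - U (Suc l))) = (1 - r) * S"
      unfolding S_def by (simp add: Usuc sum_distrib_left algebra_simps sum_subtractf)
    hence S_eq: "(1 - r) * S = nu" using tele U1 UL by simp
    have S_pos: "S > 0" unfolding S_def using assms(6) Upos by (intro sum_pos) auto
    have "(\<Sum>l=1..L. (U l - U (Suc l)) * F (U l)) = (1 - r) * (\<Sum>l=1..L. U l * F (U l))"
      by (simp add: Usuc sum_distrib_left algebra_simps)
    hence "J \<le> (1 - r) * (\<Sum>l=1..L. U l * F (U l))" using main J_eq U1 UL by simp
    hence "(1/nu) * J \<le> (1/nu) * ((1 - r) * (\<Sum>l=1..L. U l * F (U l)))"
      using nu_pos by (intro mult_left_mono) auto
    also have "\<dots> = (\<Sum>l=1..L. U l * F (U l)) / S"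
    proof -
      have r1: "1 - r = nu / S" using S_eq S_pos by (simp add: field_simps)
      show ?thesis using nu_pos S_pos by (simp add: r1)
    qed
    also have "\<dots> = g_L M snr a C' R L x"
      unfolding g_L_def pi_l_def U_def[symmetric] S_def[symmetric] F_def
      by (simp add: sum_divide_distrib)
    finally show "g_L M snr a C' R L x \<ge> g M snr a C' R x" using g_eq by simp
  qed
qed

end
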